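(* Consider the parallel-links routing game described in the context in which all users have equal demands $r^i=R/N$ for every $i$, and the costs are $J^i(\mathbf f)=\sum_l f^i_lT_l(f_l)$ with each $T_l:[0,\infty)\to[0,\infty)$ strictly increasing, convex and continuously differentiable. Then: (1) there is at most one cost vector $\tilde{\mathbf g}\in\mathcal G$ satisfying both Pareto optimality (N2) and Symmetry (N3); (2) $PoS=1$; moreover the NBS cost vector is the cost vector of a single feasible routing profile whose link totals are system-optimal (so the NBS outcome is socially optimal with probability $1$).
   Context: Parallel-links routing game: users $\mathcal N=\{1,\dots,N\}$ share parallel links $\mathcal L=\{1,\dots,L\}$ from a common source to a common destination. User $i$ has demand $r^i>0$, $R=\sum_ir^i$. A routing strategy of user $i$ is $\mathbf f^i=(f^i_l)_{l}$ with $f^i_l\ge0$, $\sum_lf^i_l=r^i$; feasible profiles $\mathbf f=(\mathbf f^1,\dots,\mathbf f^N)$ form the set $\mathbf F$; $f_l=\sum_if^i_l$. NEP: a feasible $\hat{\mathbf f}$ such that each $\hat{\mathbf f}^i$ minimizes $J^i$ over user $i$'s feasible strategies given the others'; it exists and is unique. $\hat J^i=J^i(\hat{\mathbf f})$. Social cost $J_{sys}(\mathbf f)=\sum_iJ^i(\mathbf f)=\sum_lf_lT_l(f_l)$; $J^*_{sys}$ its minimum over $\mathbf F$, attained at system-optimal link flows $(f^*_l)$. Bargaining: $\mathcal G$ is the set of all vectors $\sum_{m=1}^Mp_m(J^1(\mathbf f(m)),\dots,J^N(\mathbf f(m)))$ with $M$ finite, $p_m>0$, $\sum_mp_m=1$,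 $\mathbf f(m)\in\mathbf F$. Axiom N2 (Pareto optimality) for $\tilde{\mathbf g}\in\mathcal G$: there is no $\mathbf g\in\mathcal G$ with $g^i\le\tilde g^i$ for all $i$ and $g^i<\tilde g^i$ for some $i$. Axiom N3 (Symmetry): for any users $i,k$, if $\hat J^i=\hat J^k$ and $\mathcal G$ is invariant under swapping coordinates $i$ and $k$, then $\tilde g^i=\tilde g^k$. The NBS is the unique $\tilde{\mathbf g}$ maximizing $\prod_i(\hat J^i-g^i)$ over $\mathbf g\in\mathcal G$ with $g^i\le\hat J^i$ for all $i$. $PoS=(\sum_i\tilde g^i)/J^*_{sys}$. *)

theory Defs
  imports "HOL-Analysis.Analysis"
begin

definition strategies :: "nat \<Rightarrow> real \<Rightarrow> (nat \<Rightarrow> real) set" where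
  "strategies L d = {s. (\<forall>l\<in>{1..L}. 0 \<le> s l) \<and> (\<Sum>l\<in>{1..L}. s l) = d}"

definition feasible :: "nat \<Rightarrow> nat \<Rightarrow> (nat \<Rightarrow> real) \<Rightarrow> (nat \<Rightarrow> nat \<Rightarrow> real) set" where
  "feasible N L r = {f. \<forall>i\<in>{1..N}. f i \<in> strategies L (r i)}"

definition link_flow :: "nat \<Rightarrow> (nat \<Rightarrow> nat \<Rightarrow> real) \<Rightarrow> nat \<Rightarrow> real" where
  "link_flow N f l = (\<Sum>i\<in>{1..N}. f i l)"

definition cost :: "nat \<Rightarrow> nat \<Rightarrow> (nat \<Rightarrow> real \<Rightarrow> real) \<Rightarrow> nat \<Rightarrow> (nat \<Rightarrow> nat \<Rightarrow> real) \<Rightarrow> real" where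
  "cost N L T i f = (\<Sum>l\<in>{1..L}. f i l * T l (link_flow N f l))"

definition cost_vec :: "nat \<Rightarrow> nat \<Rightarrow> (nat \<Rightarrow> real \<Rightarrow> real) \<Rightarrow> (nat \<Rightarrow> nat \<Rightarrow> real) \<Rightarrow> (nat \<Rightarrow> real)" where
  "cost_vec N L T f = (\<lambda>i. if i \<in> {1..N} then cost N L T i f else 0)"

definition J_sys :: "nat \<Rightarrow> nat \<Rightarrow> (nat \<Rightarrow> real \<Rightarrow> real) \<Rightarrow> (nat \<Rightarrow> nat \<Rightarrow> real) \<Rightarrow> real" where
  "J_sys N L T f = (\<Sum>i\<in>{1..N}. cost N L T i f)"

definition J_sys_opt :: "nat \<Rightarrow> nat \<Rightarrow> (nat \<Rightarrow> real \<Rightarrow> real) \<Rightarrow> (nat \<Rightarrow> real) \<Rightarrow> real" where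
  "J_sys_opt N L T r = (INF f\<in>feasible N L r. J_sys N L T f)"

definition is_NEP :: "nat \<Rightarrow> nat \<Rightarrow> (nat \<Rightarrow> real \<Rightarrow> real) \<Rightarrow> (nat \<Rightarrow> real) \<Rightarrow> (nat \<Rightarrow> nat \<Rightarrow> real) \<Rightarrow> bool" where
  "is_NEP N L T r fh \<longleftrightarrow> fh \<in> feasible N L r \<and>
     (\<forall>i\<in>{1..N}. \<forall>s\<in>strategies L (r i). cost N L T i fh \<le> cost N L T i (fh(i := s)))"

text \<open>The set G of achievable (randomized) cost vectors; coordinates outside 1..N are 0.\<close>
definition cost_set :: "nat \<Rightarrow> nat \<Rightarrow> (nat \<Rightarrow> real \<Rightarrow> real) \<Rightarrow> (nat \<Rightarrow> real) \<Rightarrow> (nat \<Rightarrow> real) set" where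
  "cost_set N L T r = {g. \<exists>(M::nat) (p::nat \<Rightarrow> real) (fs::nat \<Rightarrow> nat \<Rightarrow> nat \<Rightarrow> real).
      (\<forall>m<M. 0 < p m) \<and> (\<Sum>m<M. p m) = 1 \<and> (\<forall>m<M. fs m \<in> feasible N L r) \<and>
      g = (\<lambda>i. if i \<in> {1..N} then (\<Sum>m<M. p m * cost N L T i (fs m)) else 0)}"

definition pareto_opt :: "nat \<Rightarrow> (nat \<Rightarrow> real) set \<Rightarrow> (nat \<Rightarrow> real) \<Rightarrow> bool" where
  "pareto_opt N G gt \<longleftrightarrow>
     \<not> (\<exists>g\<in>G. (\<forall>i\<in>{1..N}. g i \<le> gt i) \<and> (\<exists>i\<in>{1..N}. g i < gt i))"

definition swap_coords :: "nat \<Rightarrow> nat \<Rightarrow> (nat \<Rightarrow> real) \<Rightarrow> (nat \<Rightarrow> real)" where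
  "swap_coords i k g = (\<lambda>j. if j = i then g k else if j = k then g i else g j)"

definition symmetric_N3 :: "nat \<Rightarrow> (nat \<Rightarrow> real) set \<Rightarrow> (nat \<Rightarrow> real) \<Rightarrow> (nat \<Rightarrow> real) \<Rightarrow> bool" where
  "symmetric_N3 N G hatJ gt \<longleftrightarrow>
     (\<forall>i\<in>{1..N}. \<forall>k\<in>{1..N}. hatJ i = hatJ k \<and> swap_coords i k ` G = G \<longrightarrow> gt i = gt k)"

definition is_NBS :: "nat \<Rightarrow> (nat \<Rightarrow> real) set \<Rightarrow> (nat \<Rightarrow> real) \<Rightarrow> (nat \<Rightarrow> real) \<Rightarrow> bool" where
  "is_NBS N G hatJ gt \<longleftrightarrow> gt \<in> G \<and> (\<forall>i\<in>{1..N}. gt i \<le> hatJ i) \<and>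
     (\<forall>g\<in>G. (\<forall>i\<in>{1..N}. g i \<le> hatJ i) \<longrightarrow>
        (\<Prod>i\<in>{1..N}. hatJ i - g i) \<le> (\<Prod>i\<in>{1..N}. hatJ i - gt i))"

end

theory Submission
  imports Defs
begin


lemma deriv_min_left:
  fixes h :: "real \<Rightarrow> real"
  assumes d: "(h has_real_derivative D) (at x within {x..x+e})" and e: "e > 0"
    and m: "\<forall>y\<in>{x..x+e}. h x \<le> h y"
  shows "D \<ge> 0"
proof -
  have "((\<lambda>y. (h y - h x) / (y - x)) \<longlongrightarrow> D) (at x within {x..x+e})"
    using d has_field_derivative_iff by blast
  hence t: "((\<lambda>y. (h y - h x) / (y - x)) \<longlongrightarrow> D) (at_right x)"
    using at_within_Icc_at_right[of x "x+e"] e by simp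
  have "eventually (\<lambda>y. y \<in> {x<..<x+e}) (at_right x)"
    using eventually_at_right_real[of x "x+e"] e by simp
  hence "eventually (\<lambda>y. (h y - h x) / (y - x) \<ge> 0) (at_right x)"
    by eventually_elim (use m in auto)
  then show ?thesis using tendsto_lowerbound[OF t] by simp
qed

lemma deriv_nonneg_mono:
  fixes T :: "real \<Rightarrow> real"
  assumes d: "(T has_real_derivative D) (at x within {0..})" and x: "x \<ge> 0"
    and m: "strict_mono_on {0..} T"
  shows "D \<ge> 0"
proof (rule deriv_min_left[where h=T and x=x and e=1])
  show "(T has_real_derivative D) (at x within {x..x+1})"
    using has_field_derivative_subset[OF d] x by auto
  show "\<forall>y\<in>{x..x + 1}. T x \<le> T y"
  proof
    fix y assume y: "y \<in> {x..x+1}"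
    show "T x \<le> T y"
    proof (cases "y = x")
      case False thus ?thesis using y x by (auto intro!: less_imp_le strict_mono_onD[OF m])
    qed simp
  qed
qed simp

lemma deriv_pos_convex:
  fixes T :: "real \<Rightarrow> real"
  assumes d: "(T has_real_derivative D) (at x within {0..})" and x: "x > 0"
    and m: "strict_mono_on {0..} T" and c: "convex_on {0..} T"
  shows "D > 0"
proof -
  have "T 0 - T x \<ge> D * (0 - x)"
    by (rule convex_on_imp_above_tangent[OF c]) (use d x in \<open>auto simp: is_interval_connected\<close>)
  moreover have "T 0 < T x" using m x by (auto intro: strict_mono_onD)
  ultimately have "D * x > 0" by simp
  thus ?thesis using x by (simp add: zero_less_mult_iff)
qed

locale game =
  fixes N L :: nat and T :: "nat \<Rightarrow> real \<Rightarrow> real" and r :: "nat \<Rightarrow> real"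
    and D :: "nat \<Rightarrow> real \<Rightarrow> real"
  assumes N_pos: "N \<ge> 1" and L_pos: "L \<ge> 1"
    and r_pos: "\<forall>i\<in>{1..N}. r i > 0"
    and r_equal: "\<forall>i\<in>{1..N}. r i = (\<Sum>j\<in>{1..N}. r j) / real N"
    and T_nonneg: "\<forall>l\<in>{1..L}. \<forall>x\<ge>0. T l x \<ge> 0"
    and T_incr: "\<forall>l\<in>{1..L}. strict_mono_on {0..} (T l)"
    and T_convex: "\<forall>l\<in>{1..L}. convex_on {0..} (T l)"
    and T_deriv: "\<forall>l\<in>{1..L}. \<forall>x\<ge>0. (T l has_real_derivative D l x) (at x within {0..})"
begin

lemma flow_update:
  assumes i: "i \<in> {1..N}"
  shows "link_flow N (fh(i:=s)) l = link_flow N fh l - fh i l + s l"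
proof -
  have "link_flow N (fh(i:=s)) l = s l + (\<Sum>j\<in>{1..N}-{i}. fh j l)"
    unfolding link_flow_def using i by (subst sum.remove[of _ i]) auto
  moreover have "link_flow N fh l = fh i l + (\<Sum>j\<in>{1..N}-{i}. fh j l)"
    unfolding link_flow_def using i by (subst sum.remove[of _ i]) auto
  ultimately show ?thesis by simp
qed

lemma feas_nonneg:
  assumes "f \<in> feasible N L r" "i \<in> {1..N}" "l \<in> {1..L}"
  shows "f i l \<ge> 0"
  using assms unfolding feasible_def strategies_def by auto

lemma feas_sum:
  assumes "f \<in> feasible N L r" "i \<in> {1..N}"
  shows "(\<Sum>l\<in>{1..L}. f i l) = r i"
  using assms unfolding feasible_def strategies_def by auto

lemma flow_ge:
  assumes "f \<in> feasible N L r" "i \<in> {1..N}" "l \<in> {1..L}"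
  shows "link_flow N f l \<ge> f i l"
  unfolding link_flow_def
  by (rule member_le_sum) (use assms feas_nonneg in auto)

lemma flow_nonneg:
  assumes "f \<in> feasible N L r" "l \<in> {1..L}"
  shows "link_flow N f l \<ge> 0"
  unfolding link_flow_def
  by (rule sum_nonneg) (use assms feas_nonneg in auto)

lemma kkt:
  assumes NEP: "is_NEP N L T r fh" and i: "i \<in> {1..N}" and a: "a \<in> {1..L}"
    and b: "b \<in> {1..L}" and ab: "a \<noteq> b" and pos: "fh i a > 0"
  shows "T a (link_flow N fh a) + fh i a * D a (link_flow N fh a)
     \<le> T b (link_flow N fh b) + fh i b * D b (link_flow N fh b)"
proof -
  let ?F = "link_flow N fh"
  define c where "c l = (if l = b then 1 else if l = a then -1 else (0::real))" for l
  define h where "h \<epsilon> = (\<Sum>l\<in>{1..L}. (fh i l + \<epsilon> * c l) * T l (?F l + \<epsilon> * c l))" for \<epsilon>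
  define e where "e = fh i a"
  have feas: "fh \<in> feasible N L r" using NEP unfolding is_NEP_def by auto
  have csum: "(\<Sum>l\<in>{1..L}. c l) = 0"
  proof -
    have "c l = (if l = b then 1 else 0) - (if l = a then 1 else 0)" for l
      unfolding c_def using ab by auto
    then show ?thesis using a b by (simp add: sum_subtractf)
  qed
  have hmin: "\<forall>\<epsilon>\<in>{0..0+e}. h 0 \<le> h \<epsilon>"
  proof
    fix \<epsilon> assume ep: "\<epsilon> \<in> {0..0+e}"
    define s where "s l = fh i l + \<epsilon> * c l" for l
    have "s \<in> strategies L (r i)"
      unfolding strategies_def
    proof (intro CollectI conjI ballI)
      fix l assume l: "l \<in> {1..L}"
      show "0 \<le> s l" using ep feas_nonneg[OF feas i l] unfolding s_def c_def e_def by auto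
    next
      show "(\<Sum>l\<in>{1..L}. s l) = r i"
        unfolding s_def using feas_sum[OF feas i] csum
        by (simp add: sum.distrib sum_distrib_left[symmetric])
    qed
    hence "cost N L T i fh \<le> cost N L T i (fh(i:=s))"
      using NEP i unfolding is_NEP_def by auto
    moreover have "cost N L T i (fh(i:=s)) = h \<epsilon>"
      unfolding cost_def h_def flow_update[OF i] by (simp add: s_def)
    moreover have "cost N L T i fh = h 0"
      unfolding cost_def h_def by simp
    ultimately show "h 0 \<le> h \<epsilon>" by simp
  qed
  have hd: "(h has_real_derivative
      (\<Sum>l\<in>{1..L}. c l * T l (?F l + 0 * c l) + (D l (?F l + 0 * c l) * c l) * (fh i l + 0 * c l)))
      (at 0 within {0..0+e})"
    unfolding h_def
  proof (rule DERIV_sum)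
    fix l assume l: "l \<in> {1..L}"
    have g: "((\<lambda>\<epsilon>. ?F l + \<epsilon> * c l) has_real_derivative c l) (at 0 within {0..0+e})"
      by (auto intro!: derivative_eq_intros)
    have sub: "(\<lambda>\<epsilon>. ?F l + \<epsilon> * c l) ` {0..0+e} \<subseteq> {0..}"
    proof
      fix y assume "y \<in> (\<lambda>\<epsilon>. ?F l + \<epsilon> * c l) ` {0..0+e}"
      then obtain \<epsilon> where ep: "\<epsilon> \<in> {0..e}" and y: "y = ?F l + \<epsilon> * c l" by auto
      have "?F l \<ge> 0" using flow_nonneg[OF feas l] .
      moreover have "?F a \<ge> fh i a" using flow_ge[OF feas i a] .
      ultimately show "y \<in> {0..}" using ep unfolding y c_def e_def by auto
    qed
    have "(T l has_real_derivative D l (?F l + 0 * c l)) (at (?F l + 0 * c l) within (\<lambda>\<epsilon>. ?F l + \<epsilon> * c l) ` {0..0+e})"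
      using has_field_derivative_subset[OF _ sub] T_deriv l flow_nonneg[OF feas l] by simp
    from DERIV_image_chain[OF this g]
    have dT: "((\<lambda>\<epsilon>. T l (?F l + \<epsilon> * c l)) has_real_derivative D l (?F l + 0 * c l) * c l) (at 0 within {0..0+e})"
      by (simp add: o_def)
    have df: "((\<lambda>\<epsilon>. fh i l + \<epsilon> * c l) has_real_derivative c l) (at 0 within {0..0+e})"
      by (auto intro!: derivative_eq_intros)
    show "((\<lambda>\<epsilon>. (fh i l + \<epsilon> * c l) * T l (?F l + \<epsilon> * c l)) has_real_derivative
       c l * T l (?F l + 0 * c l) + (D l (?F l + 0 * c l) * c l) * (fh i l + 0 * c l)) (at 0 within {0..0+e})"
      by (rule DERIV_mult[OF df dT])
  qed
  have "e > 0" using pos e_def by simp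
  from deriv_min_left[OF hd this hmin]
  have ge: "0 \<le> (\<Sum>l\<in>{1..L}. c l * (T l (?F l) + fh i l * D l (?F l)))"
    by (simp add: algebra_simps)
  define X where "X l = T l (?F l) + fh i l * D l (?F l)" for l
  have "c l * X l = (if l = b then X l else 0) - (if l = a then X l else 0)" for l
    unfolding c_def using ab by auto
  hence "(\<Sum>l\<in>{1..L}. c l * X l) = X b - X a" using a b by (simp add: sum_subtractf)
  with ge show ?thesis unfolding X_def by simp
qed


lemma r_eq: "i \<in> {1..N} \<Longrightarrow> k \<in> {1..N} \<Longrightarrow> r i = r k"
  using r_equal by metis

lemma nep_le:
  assumes NEP: "is_NEP N L T r fh" and i: "i \<in> {1..N}" and k: "k \<in> {1..N}" and a: "a \<in> {1..L}"
  shows "fh i a \<le> fh k a"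
proof (rule ccontr)
  let ?F = "link_flow N fh"
  assume "\<not> fh i a \<le> fh k a"
  hence lt: "fh k a < fh i a" by simp
  have feas: "fh \<in> feasible N L r" using NEP unfolding is_NEP_def by auto
  have "\<exists>b\<in>{1..L}. fh i b < fh k b"
  proof (rule ccontr)
    assume "\<not> ?thesis"
    hence "\<forall>b\<in>{1..L}. fh k b \<le> fh i b" by auto
    hence "(\<Sum>l\<in>{1..L}. fh k l) < (\<Sum>l\<in>{1..L}. fh i l)"
      using sum_strict_mono_ex1[of "{1..L}"] lt a by blast
    thus False using feas_sum[OF feas i] feas_sum[OF feas k] r_eq[OF i k] by simp
  qed
  then obtain b where b: "b \<in> {1..L}" and ltb: "fh i b < fh k b" by blast
  have ab: "a \<noteq> b" using lt ltb by auto
  have pa: "fh i a > 0" using lt feas_nonneg[OF feas k a] by simp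
  have pb: "fh k b > 0" using ltb feas_nonneg[OF feas i b] by simp
  have k1: "T a (?F a) + fh i a * D a (?F a) \<le> T b (?F b) + fh i b * D b (?F b)"
    by (rule kkt[OF NEP i a b ab pa])
  have k2: "T b (?F b) + fh k b * D b (?F b) \<le> T a (?F a) + fh k a * D a (?F a)"
    by (rule kkt[OF NEP k b a ab[symmetric] pb])
  have Da: "D a (?F a) > 0"
    using deriv_pos_convex[of "T a" "D a (?F a)" "?F a"] T_deriv T_incr T_convex a
      flow_ge[OF feas i a] pa by auto
  have Db: "D b (?F b) \<ge> 0"
    using deriv_nonneg_mono[of "T b" "D b (?F b)" "?F b"] T_deriv T_incr b
      flow_nonneg[OF feas b] by auto
  have "fh k a * D a (?F a) < fh i a * D a (?F a)" using Da lt by simp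
  moreover have "fh i b * D b (?F b) \<le> fh k b * D b (?F b)" using Db ltb by (simp add: mult_right_mono)
  ultimately show False using k1 k2 by linarith
qed

lemma nep_sym:
  assumes NEP: "is_NEP N L T r fh" and i: "i \<in> {1..N}" and k: "k \<in> {1..N}"
  shows "cost N L T i fh = cost N L T k fh"
proof -
  have "\<forall>l\<in>{1..L}. fh i l = fh k l"
    using nep_le[OF NEP i k] nep_le[OF NEP k i] by (simp add: order_antisym)
  thus ?thesis unfolding cost_def by simp
qed

end


lemma amgm:
  fixes y :: "'a \<Rightarrow> real"
  assumes fin: "finite S" and ne: "S \<noteq> {}" and nn: "\<forall>i\<in>S. y i \<ge> 0"
  shows "(\<Prod>i\<in>S. y i) \<le> ((\<Sum>i\<in>S. y i) / card S) ^ card S"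
proof -
  let ?n = "card S"
  have n: "?n > 0" using fin ne by (simp add: card_gt_0_iff)
  have am: "(\<Sum>i\<in>S. y i / ?n) \<ge> (\<Prod>i\<in>S. y i) powr (1 / ?n)"
    using arith_geom_mean[OF fin ne] nn by blast
  have eq: "(\<Sum>i\<in>S. y i / ?n) = (\<Sum>i\<in>S. y i) / ?n" by (simp add: sum_divide_distrib)
  have P0: "(\<Prod>i\<in>S. y i) \<ge> 0" using nn by (simp add: prod_nonneg)
  have "((\<Prod>i\<in>S. y i) powr (1 / ?n)) ^ ?n = (\<Prod>i\<in>S. y i)"
  proof (cases "(\<Prod>i\<in>S. y i) = 0")
    case True thus ?thesis using n by simp
  next
    case False
    hence pos: "(\<Prod>i\<in>S. y i) > 0" using P0 by simp
    have "((\<Prod>i\<in>S. y i) powr (1 / ?n)) ^ ?n = ((\<Prod>i\<in>S. y i) powr (1 / ?n)) powr (real ?n)"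
      by (rule powr_realpow[symmetric]) (use pos in simp)
    also have "\<dots> = (\<Prod>i\<in>S. y i)" using n pos by (simp add: powr_powr)
    finally show ?thesis .
  qed
  moreover have "((\<Prod>i\<in>S. y i) powr (1 / ?n)) ^ ?n \<le> ((\<Sum>i\<in>S. y i) / ?n) ^ ?n"
    by (rule power_mono) (use am eq in auto)
  ultimately show ?thesis by simp
qed

lemma amgm_eq:
  fixes y :: "'a \<Rightarrow> real" and m :: real
  assumes fin: "finite S" and ne: "S \<noteq> {}" and nn: "\<forall>i\<in>S. y i \<ge> 0"
    and sm: "(\<Sum>i\<in>S. y i) \<le> card S * m" and m: "m > 0"
    and pr: "(\<Prod>i\<in>S. y i) \<ge> m ^ card S"
  shows "\<forall>i\<in>S. y i = m"
proof (rule ccontr)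
  let ?n = "card S"
  assume "\<not> ?thesis"
  then obtain j where j: "j \<in> S" and yj: "y j \<noteq> m" by auto
  define z where "z i = (y i + m) / 2" for i
  have n: "?n > 0" using fin ne by (simp add: card_gt_0_iff)
  have ypos: "\<forall>i\<in>S. y i > 0"
  proof (rule ccontr)
    assume "\<not> ?thesis"
    then obtain i where "i \<in> S" "y i = 0" using nn by force
    hence "(\<Prod>i\<in>S. y i) = 0" using fin by (metis prod_zero_iff)
    thus False using pr m by (metis zero_less_power not_le)
  qed
  have "(\<Prod>i\<in>S. z i) \<le> ((\<Sum>i\<in>S. z i) / ?n) ^ ?n"
    by (rule amgm[OF fin ne]) (use nn m in \<open>auto simp: z_def\<close>)
  also have "\<dots> \<le> m ^ ?n"
  proof (rule power_mono)
    have "(\<Sum>i\<in>S. z i) = ((\<Sum>i\<in>S. y i) + ?n * m) / 2"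
      unfolding z_def by (simp add: sum_divide_distrib[symmetric] sum.distrib)
    thus "(\<Sum>i\<in>S. z i) / ?n \<le> m" using sm n by (simp add: field_simps)
    show "0 \<le> (\<Sum>i\<in>S. z i) / ?n" using nn m by (auto simp: z_def intro!: sum_nonneg divide_nonneg_nonneg)
  qed
  finally have up: "(\<Prod>i\<in>S. z i) \<le> m ^ ?n" .
  have zsq: "\<forall>i\<in>S. y i * m \<le> z i ^ 2"
  proof
    fix i assume "i \<in> S"
    have "0 \<le> (y i - m)^2" by simp
    thus "y i * m \<le> z i ^ 2" unfolding z_def by (simp add: power2_eq_square field_simps)
  qed
  have zsqj: "y j * m < z j ^ 2"
  proof -
    have "0 < (y j - m)^2" using yj by simp
    thus ?thesis unfolding z_def by (simp add: power2_eq_square field_simps)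
  qed
  have "(\<Prod>i\<in>S. y i * m) < (\<Prod>i\<in>S. z i ^ 2)"
  proof -
    have "(\<Prod>i\<in>S. y i * m) = y j * m * (\<Prod>i\<in>S-{j}. y i * m)"
      using prod.remove[OF fin j] by simp
    also have "\<dots> < z j ^ 2 * (\<Prod>i\<in>S-{j}. z i ^ 2)"
    proof (rule mult_strict_right_mono[THEN less_le_trans])
      show "y j * m < z j ^ 2" by (rule zsqj)
      show "0 < (\<Prod>i\<in>S-{j}. y i * m)" using ypos m by (auto intro!: prod_pos)
      show "z j ^ 2 * (\<Prod>i\<in>S-{j}. y i * m) \<le> z j ^ 2 * (\<Prod>i\<in>S-{j}. z i ^ 2)"
        by (rule mult_left_mono) (auto intro!: prod_mono simp: zsq[rule_format] ypos m less_imp_le)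
    qed
    also have "\<dots> = (\<Prod>i\<in>S. z i ^ 2)" using prod.remove[OF fin j, of "\<lambda>i. z i ^ 2"] by simp
    finally show ?thesis .
  qed
  moreover have "(\<Prod>i\<in>S. y i * m) = (\<Prod>i\<in>S. y i) * m ^ ?n"
    by (simp add: prod.distrib)
  moreover have "(\<Prod>i\<in>S. z i ^ 2) = (\<Prod>i\<in>S. z i) ^ 2" by (simp add: prod_power_distrib)
  ultimately have "(\<Prod>i\<in>S. y i) * m ^ ?n < (\<Prod>i\<in>S. z i) ^ 2" by simp
  moreover have "m ^ ?n * m ^ ?n \<le> (\<Prod>i\<in>S. y i) * m ^ ?n"
    using pr m by (simp add: mult_right_mono)
  moreover have "(\<Prod>i\<in>S. z i) ^ 2 \<le> (m ^ ?n) ^ 2"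
    by (rule power_mono[OF up]) (use nn m in \<open>auto simp: z_def intro!: prod_nonneg\<close>)
  ultimately show False by (simp add: power2_eq_square)
qed

context game begin
definition Rt where "Rt = (\<Sum>j\<in>{1..N}. r j)"
definition Phi where "Phi x = (\<Sum>l\<in>{1..L}. x l * T l (x l))"
definition Xs where "Xs = {x. (\<forall>l\<in>{1..L}. 0 \<le> x l) \<and> (\<Sum>l\<in>{1..L}. x l) = Rt}"
definition spl where "spl x = (\<lambda>(i::nat) l. x l / real N)"

lemma Rt_pos: "Rt > 0"
  unfolding Rt_def using r_pos N_pos by (intro sum_pos) auto
lemma r_Rt: "i \<in> {1..N} \<Longrightarrow> r i = Rt / N"
  using r_equal unfolding Rt_def by blast

lemma Jsys_eq: "J_sys N L T f = Phi (link_flow N f)"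
  unfolding J_sys_def cost_def Phi_def
  by (subst sum.swap) (simp add: link_flow_def sum_distrib_right)

lemma flow_in_X: "f \<in> feasible N L r \<Longrightarrow> link_flow N f \<in> Xs"
  unfolding Xs_def
proof (intro CollectI conjI ballI)
  fix l assume "f \<in> feasible N L r" "l \<in> {1..L}"
  thus "0 \<le> link_flow N f l" by (rule flow_nonneg)
next
  assume f: "f \<in> feasible N L r"
  have "(\<Sum>l\<in>{1..L}. link_flow N f l) = (\<Sum>i\<in>{1..N}. \<Sum>l\<in>{1..L}. f i l)"
    unfolding link_flow_def by (rule sum.swap)
  also have "\<dots> = (\<Sum>i\<in>{1..N}. r i)" using feas_sum[OF f] by simp
  finally show "(\<Sum>l\<in>{1..L}. link_flow N f l) = Rt" unfolding Rt_def .
qed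

lemma split_feas: "x \<in> Xs \<Longrightarrow> spl x \<in> feasible N L r"
proof -
  assume x: "x \<in> Xs"
  show ?thesis unfolding feasible_def strategies_def
  proof (intro CollectI ballI conjI)
    fix i l assume i: "i \<in> {1..N}" and l: "l \<in> {1..L}"
    show "0 \<le> spl x i l" using x l unfolding spl_def Xs_def by simp
  next
    fix i assume i: "i \<in> {1..N}"
    have "(\<Sum>l\<in>{1..L}. spl x i l) = (\<Sum>l\<in>{1..L}. x l) / N"
      unfolding spl_def by (simp add: sum_divide_distrib)
    also have "\<dots> = r i" using x r_Rt[OF i] unfolding Xs_def by simp
    finally show "(\<Sum>l\<in>{1..L}. spl x i l) = r i" .
  qed
qed

lemma split_flow: "link_flow N (spl x) l = x l"
  unfolding link_flow_def spl_def using N_pos by simp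

lemma split_cost: "cost N L T i (spl x) = Phi x / N"
  unfolding cost_def split_flow Phi_def by (simp add: spl_def sum_divide_distrib)

lemma T_cont: "l \<in> {1..L} \<Longrightarrow> continuous_on {0..} (T l)"
  unfolding continuous_on_eq_continuous_within
proof
  fix x :: real assume "l \<in> {1..L}" "x \<in> {0..}"
  thus "continuous (at x within {0..}) (T l)"
    using T_deriv by (intro DERIV_continuous[of _ "D l x"]) auto
qed

lemma exists_opt: "\<exists>x\<in>Xs. \<forall>y\<in>Xs. Phi x \<le> Phi y"
proof -
  define S where "S l = (if l \<in> {1..L} then {0..Rt} else {0::real})" for l
  define K where "K = {x. \<forall>l. x l \<in> S l} \<inter> {x. (\<Sum>l\<in>{1..L}. x l) = Rt}"
  have "\<forall>l\<in>UNIV. compactin euclidean (S l)" by (simp add: S_def)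
  hence "compactin (product_topology (\<lambda>_. euclidean) UNIV) (PiE UNIV S)"
    using compactin_PiE by blast
  hence "compact (PiE UNIV S)" by (simp add: euclidean_product_topology)
  moreover have "PiE UNIV S = {x. \<forall>l. x l \<in> S l}" by (auto simp: PiE_UNIV_domain)
  ultimately have c1: "compact {x. \<forall>l. x l \<in> S l}" by simp
  have "continuous_on UNIV (\<lambda>x::nat\<Rightarrow>real. (\<Sum>l\<in>{1..L}. x l))"
    by (intro continuous_on_sum) (rule continuous_on_product_coordinates)
  hence c2: "closed {x::nat\<Rightarrow>real. (\<Sum>l\<in>{1..L}. x l) = Rt}"
    using closed_Collect_eq[of "\<lambda>x::nat\<Rightarrow>real. (\<Sum>l\<in>{1..L}. x l)" "\<lambda>_. Rt"] by simp
  have K: "compact K" unfolding K_def using c1 c2 by auto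
  define x0 :: "nat \<Rightarrow> real" where "x0 l = (if l = 1 then Rt else 0)" for l
  have "x0 \<in> K" unfolding K_def S_def x0_def using Rt_pos L_pos by auto
  hence Kne: "K \<noteq> {}" by auto
  have cont: "continuous_on K Phi"
    unfolding Phi_def
  proof (intro continuous_on_sum continuous_on_mult)
    fix l assume l: "l \<in> {1..L}"
    show "continuous_on K (\<lambda>x. x l)"
      by (rule continuous_on_subset[OF continuous_on_product_coordinates]) auto
    have sub: "(\<lambda>x. x l) ` K \<subseteq> {0..}"
    proof
      fix y assume "y \<in> (\<lambda>x. x l) ` K"
      then obtain x where "x \<in> K" "y = x l" by blast
      hence "y \<in> S l" unfolding K_def by blast
      thus "y \<in> {0..}" using l unfolding S_def by auto
    qed
    show "continuous_on K (\<lambda>x. T l (x l))"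
      by (rule continuous_on_compose2[OF T_cont[OF l] continuous_on_subset[OF continuous_on_product_coordinates] sub]) auto
  qed
  obtain x where xK: "x \<in> K" and xmin: "\<forall>y\<in>K. Phi x \<le> Phi y"
    using continuous_attains_inf[OF K Kne cont] by blast
  have KX: "K \<subseteq> Xs" unfolding K_def Xs_def S_def by auto
  show ?thesis
  proof (intro bexI ballI)
    fix y assume y: "y \<in> Xs"
    define y' where "y' l = (if l \<in> {1..L} then y l else 0)" for l
    have "y' \<in> K" unfolding K_def S_def y'_def
    proof (intro IntI CollectI allI)
      fix l
      show "(if l \<in> {1..L} then y l else 0) \<in> (if l \<in> {1..L} then {0..Rt} else {0})"
      proof (cases "l \<in> {1..L}")
        case True
        have "y l \<le> (\<Sum>l\<in>{1..L}. y l)" by (rule member_le_sum) (use y True in \<open>auto simp: Xs_def\<close>)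
        thus ?thesis using True y by (auto simp: Xs_def)
      qed auto
    next
      show "(\<Sum>l\<in>{1..L}. if l \<in> {1..L} then y l else 0) = Rt" using y by (simp add: Xs_def)
    qed
    moreover have "Phi y' = Phi y" unfolding Phi_def y'_def by simp
    ultimately show "Phi x \<le> Phi y" using xmin by metis
  qed (use xK KX in auto)
qed

end

context game begin

definition xo where "xo = (SOME x. x \<in> Xs \<and> (\<forall>y\<in>Xs. Phi x \<le> Phi y))"
definition Js where "Js = Phi xo"
definition cst where "cst = (\<lambda>i. if i \<in> {1..N} then Js / N else 0)"

lemma xo: "xo \<in> Xs" "\<forall>y\<in>Xs. Phi xo \<le> Phi y"
  using someI_ex[of "\<lambda>x. x \<in> Xs \<and> (\<forall>y\<in>Xs. Phi x \<le> Phi y)"] exists_opt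
  unfolding xo_def by auto

lemma split_flow_fun: "link_flow N (spl x) = x"
  by (rule ext) (rule split_flow)

lemma Jsys_ge: "f \<in> feasible N L r \<Longrightarrow> Js \<le> J_sys N L T f"
  unfolding Jsys_eq Js_def using xo flow_in_X by blast

lemma Jsys_split: "J_sys N L T (spl xo) = Js"
  unfolding Jsys_eq Js_def split_flow_fun ..

lemma Jsys_opt_eq: "J_sys_opt N L T r = Js"
  unfolding J_sys_opt_def
proof (rule cInf_eq_minimum)
  show "Js \<in> J_sys N L T ` feasible N L r"
    using split_feas[OF xo(1)] Jsys_split by force
  fix y assume "y \<in> J_sys N L T ` feasible N L r"
  thus "Js \<le> y" using Jsys_ge by auto
qed

lemma Js_pos: "Js > 0"
proof -
  have "\<exists>l\<in>{1..L}. xo l > 0"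
  proof (rule ccontr)
    assume "\<not> ?thesis"
    hence "\<forall>l\<in>{1..L}. xo l \<le> 0" by (auto simp: not_less)
    hence "(\<Sum>l\<in>{1..L}. xo l) \<le> 0" by (intro sum_nonpos) auto
    thus False using xo(1) Rt_pos unfolding Xs_def by simp
  qed
  then obtain l where l: "l \<in> {1..L}" and p: "xo l > 0" by blast
  have "T l 0 < T l (xo l)" using strict_mono_onD[OF T_incr[rule_format, OF l], of 0 "xo l"] p by auto
  moreover have "T l 0 \<ge> 0" using T_nonneg l by auto
  ultimately have "xo l * T l (xo l) > 0" using p by simp
  moreover have "\<forall>l'\<in>{1..L}. xo l' * T l' (xo l') \<ge> 0"
    using xo(1) T_nonneg unfolding Xs_def by auto
  ultimately show ?thesis unfolding Js_def Phi_def
    by (intro sum_pos2[OF _ l]) auto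
qed

lemma G_elim:
  assumes "g \<in> cost_set N L T r"
  obtains M :: nat and p :: "nat \<Rightarrow> real" and fs :: "nat \<Rightarrow> nat \<Rightarrow> nat \<Rightarrow> real" where "\<forall>m<M. 0 < p m" "(\<Sum>m<M. p m) = 1" "\<forall>m<M. fs m \<in> feasible N L r"
    "g = (\<lambda>i. if i \<in> {1..N} then (\<Sum>m<M. p m * cost N L T i (fs m)) else 0)"
  using assms unfolding cost_set_def mem_Collect_eq by (elim exE conjE) (rule that; assumption)

lemma G_zero: "g \<in> cost_set N L T r \<Longrightarrow> i \<notin> {1..N} \<Longrightarrow> g i = 0"
  by (erule G_elim) auto

lemma G_sum:
  assumes g: "g \<in> cost_set N L T r"
  shows "Js \<le> (\<Sum>i\<in>{1..N}. g i)"
proof -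
  obtain M :: nat and p :: "nat \<Rightarrow> real" and fs :: "nat \<Rightarrow> nat \<Rightarrow> nat \<Rightarrow> real" where p: "\<forall>m<M. 0 < p m" "(\<Sum>m<M. p m) = 1" "\<forall>m<M. fs m \<in> feasible N L r"
    and ge: "g = (\<lambda>i. if i \<in> {1..N} then (\<Sum>m<M. p m * cost N L T i (fs m)) else 0)"
    using G_elim[OF g] by blast
  have "(\<Sum>i\<in>{1..N}. g i) = (\<Sum>i\<in>{1..N}. \<Sum>m<M. p m * cost N L T i (fs m))"
    unfolding ge by simp
  also have "\<dots> = (\<Sum>m<M. p m * J_sys N L T (fs m))"
    unfolding J_sys_def sum_distrib_left by (rule sum.swap)
  finally have eq1: "(\<Sum>i\<in>{1..N}. g i) = (\<Sum>m<M. p m * J_sys N L T (fs m))" .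
  have "(\<Sum>m<M. p m * J_sys N L T (fs m)) \<ge> (\<Sum>m<M. p m * Js)"
  proof (rule sum_mono)
    fix m assume "m \<in> {..<M}"
    hence "m < M" by simp
    thus "p m * Js \<le> p m * J_sys N L T (fs m)"
      using p(1,3) Jsys_ge by (simp add: mult_left_mono less_imp_le)
  qed
  moreover have "(\<Sum>m<M. p m * Js) = Js"
    unfolding sum_distrib_right[symmetric] p(2) by simp
  ultimately show ?thesis using eq1 by linarith
qed

lemma cst_in_G: "cst \<in> cost_set N L T r"
  unfolding cost_set_def
proof (intro CollectI exI conjI)
  show "\<forall>m<Suc 0. 0 < (\<lambda>_. 1::real) m" by simp
  show "(\<Sum>m<Suc 0. (\<lambda>_. 1::real) m) = 1" by simp
  show "\<forall>m<Suc 0. (\<lambda>_. spl xo) m \<in> feasible N L r" using split_feas[OF xo(1)] by simp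
  show "cst = (\<lambda>i. if i \<in> {1..N} then \<Sum>m<Suc 0. (\<lambda>_. 1) m * cost N L T i ((\<lambda>_. spl xo) m) else 0)"
  proof
    fix i
    have "(\<Sum>m<Suc 0. (\<lambda>_. 1::real) m * cost N L T i ((\<lambda>_. spl xo) m)) = Js / N"
      by (simp only: sum.lessThan_Suc sum.empty) (simp add: split_cost Js_def)
    thus "cst i = (if i \<in> {1..N} then \<Sum>m<Suc 0. (\<lambda>_. 1) m * cost N L T i ((\<lambda>_. spl xo) m) else 0)"
      unfolding cst_def by simp
  qed
qed

lemma cost_vec_split: "cost_vec N L T (spl xo) = cst"
  unfolding cost_vec_def cst_def split_cost Js_def ..

lemma G_swap:
  assumes i: "i \<in> {1..N}" and k: "k \<in> {1..N}" and g: "g \<in> cost_set N L T r"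
  shows "swap_coords i k g \<in> cost_set N L T r"
proof -
  obtain M :: nat and p :: "nat \<Rightarrow> real" and fs :: "nat \<Rightarrow> nat \<Rightarrow> nat \<Rightarrow> real" where p: "\<forall>m<M. 0 < p m" "(\<Sum>m<M. p m) = 1" "\<forall>m<M. fs m \<in> feasible N L r"
    and ge: "g = (\<lambda>i. if i \<in> {1..N} then (\<Sum>m<M. p m * cost N L T i (fs m)) else 0)"
    using G_elim[OF g] by blast
  define tr where "tr j = (if j = i then k else if j = k then i else j)" for j
  have trtr: "tr (tr j) = j" for j unfolding tr_def by auto
  have trN: "j \<in> {1..N} \<Longrightarrow> tr j \<in> {1..N}" for j using i k unfolding tr_def by auto
  have trN': "j \<in> {Suc 0..N} \<Longrightarrow> tr j \<in> {Suc 0..N}" for j using trN by simp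
  define fs' where "fs' m = (\<lambda>j. fs m (tr j))" for m
  have flow: "link_flow N (fs' m) l = link_flow N (fs m) l" for m l
    unfolding link_flow_def fs'_def
    by (rule sum.reindex_bij_witness[of _ tr tr]) (simp_all add: trtr trN' del: atLeastAtMost_iff)
  have cst': "cost N L T j (fs' m) = cost N L T (tr j) (fs m)" for j m
    unfolding cost_def flow by (simp add: fs'_def)
  have feas': "\<forall>m<M. fs' m \<in> feasible N L r"
  proof (intro allI impI)
    fix m assume m: "m < M"
    show "fs' m \<in> feasible N L r" unfolding feasible_def mem_Collect_eq
    proof
      fix j assume j: "j \<in> {1..N}"
      have "fs m (tr j) \<in> strategies L (r (tr j))" using p(3) m trN[OF j] unfolding feasible_def by auto
      thus "fs' m j \<in> strategies L (r j)" using r_eq[OF j trN[OF j]] unfolding fs'_def by simp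
    qed
  qed
  have "swap_coords i k g = (\<lambda>j. if j \<in> {1..N} then (\<Sum>m<M. p m * cost N L T j (fs' m)) else 0)"
  proof
    fix j
    have sw: "swap_coords i k g j = g (tr j)" unfolding swap_coords_def tr_def by simp
    show "swap_coords i k g j = (if j \<in> {1..N} then (\<Sum>m<M. p m * cost N L T j (fs' m)) else 0)"
    proof (cases "j \<in> {1..N}")
      case True thus ?thesis unfolding sw cst' using trN[OF True] ge by simp
    next
      case False
      hence "tr j = j" using i k unfolding tr_def by auto
      thus ?thesis unfolding sw using False ge by auto
    qed
  qed
  thus ?thesis unfolding cost_set_def using p(1,2) feas' by blast
qed

lemma G_swap_eq:
  assumes i: "i \<in> {1..N}" and k: "k \<in> {1..N}"
  shows "swap_coords i k ` cost_set N L T r = cost_set N L T r"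
proof
  show "swap_coords i k ` cost_set N L T r \<subseteq> cost_set N L T r" using G_swap[OF i k] by blast
  show "cost_set N L T r \<subseteq> swap_coords i k ` cost_set N L T r"
  proof
    fix g assume g: "g \<in> cost_set N L T r"
    have "swap_coords i k (swap_coords i k g) = g" unfolding swap_coords_def by auto
    thus "g \<in> swap_coords i k ` cost_set N L T r" using G_swap[OF i k g] by (metis image_eqI)
  qed
qed

end

context game begin

lemma hatJ_eq:
  assumes NEP: "is_NEP N L T r fh" and i: "i \<in> {1..N}"
  shows "cost N L T i fh = cost N L T 1 fh"
  using nep_sym[OF NEP i] N_pos by simp

lemma sum_const_N: "(\<Sum>i\<in>{1..N}. (c::real)) = N * c"
  by simp

lemma part1:
  assumes NEP: "is_NEP N L T r fh" and g: "g \<in> cost_set N L T r"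
    and po: "pareto_opt N (cost_set N L T r) g"
    and sy: "symmetric_N3 N (cost_set N L T r) (\<lambda>i. cost N L T i fh) g"
  shows "g = cst"
proof -
  have one: "1 \<in> {1..N}" using N_pos by simp
  have eq: "g i = g 1" if i: "i \<in> {1..N}" for i
  proof -
    have "cost N L T i fh = cost N L T 1 fh" by (rule hatJ_eq[OF NEP i])
    moreover have "swap_coords i 1 ` cost_set N L T r = cost_set N L T r" by (rule G_swap_eq[OF i one])
    moreover have "\<forall>i\<in>{1..N}. \<forall>k\<in>{1..N}. cost N L T i fh = cost N L T k fh \<and>
        swap_coords i k ` cost_set N L T r = cost_set N L T r \<longrightarrow> g i = g k"
      using sy unfolding symmetric_N3_def .
    ultimately show ?thesis using i one by blast
  qed
  have "(\<Sum>i\<in>{1..N}. g i) = (\<Sum>i\<in>{1..N}. g 1)" by (rule sum.cong) (simp_all only: eq)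
  hence s: "Js \<le> N * g 1" using G_sum[OF g] by simp
  have Npos: "real N > 0" using N_pos by simp
  have lo: "Js / N \<le> g 1" using s Npos by (simp add: field_simps)
  have "\<not> Js / N < g 1"
  proof
    assume lt: "Js / N < g 1"
    have "\<forall>i\<in>{1..N}. cst i \<le> g i"
    proof
      fix i assume i: "i \<in> {1..N}"
      show "cst i \<le> g i" using eq[OF i] lo i unfolding cst_def by simp
    qed
    moreover have "cst 1 < g 1" using lt one unfolding cst_def by simp
    ultimately have "\<exists>g'\<in>cost_set N L T r. (\<forall>i\<in>{1..N}. g' i \<le> g i) \<and> (\<exists>i\<in>{1..N}. g' i < g i)"
      using cst_in_G one by blast
    thus False using po unfolding pareto_opt_def by blast
  qed
  hence g1: "g 1 = Js / N" using lo by simp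
  show "g = cst"
  proof
    fix i show "g i = cst i"
    proof (cases "i \<in> {1..N}")
      case True thus ?thesis using eq[OF True] g1 unfolding cst_def by simp
    next
      case False thus ?thesis using G_zero[OF g False] unfolding cst_def by auto
    qed
  qed
qed

lemma h_ge:
  assumes NEP: "is_NEP N L T r fh"
  shows "Js / N \<le> cost N L T 1 fh"
proof -
  have feas: "fh \<in> feasible N L r" using NEP unfolding is_NEP_def by auto
  have "J_sys N L T fh = (\<Sum>i\<in>{1..N}. cost N L T 1 fh)"
    unfolding J_sys_def by (intro sum.cong refl hatJ_eq[OF NEP])
  hence "Js \<le> N * cost N L T 1 fh" using Jsys_ge[OF feas] by simp
  moreover have "real N > 0" using N_pos by simp
  ultimately show ?thesis by (simp add: field_simps)
qed

lemma prod_hat: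
  assumes NEP: "is_NEP N L T r fh"
  shows "(\<Prod>i\<in>{1..N}. cost N L T i fh - g i) = (\<Prod>i\<in>{1..N}. cost N L T 1 fh - g i)"
proof (intro prod.cong refl)
  fix i assume i: "i \<in> {1..N}"
  show "cost N L T i fh - g i = cost N L T 1 fh - g i" using hatJ_eq[OF NEP i] by simp
qed

lemma prod_cst:
  "(\<Prod>i\<in>{1..N}. h - cst i) = (h - Js / N) ^ N"
proof -
  have "(\<Prod>i\<in>{1..N}. h - cst i) = (\<Prod>i\<in>{1..N}. h - Js / N)"
    unfolding cst_def by (intro prod.cong) auto
  thus ?thesis by simp
qed

lemma cst_NBS:
  assumes NEP: "is_NEP N L T r fh"
  shows "is_NBS N (cost_set N L T r) (\<lambda>i. cost N L T i fh) cst"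
  unfolding is_NBS_def
proof (intro conjI ballI impI)
  let ?h = "cost N L T 1 fh"
  show "cst \<in> cost_set N L T r" by (rule cst_in_G)
  fix i assume i: "i \<in> {1..N}"
  show "cst i \<le> cost N L T i fh" using h_ge[OF NEP] hatJ_eq[OF NEP i] i unfolding cst_def by simp
next
  let ?h = "cost N L T 1 fh"
  fix g assume g: "g \<in> cost_set N L T r" and le: "\<forall>i\<in>{1..N}. g i \<le> cost N L T i fh"
  have le': "\<forall>i\<in>{1..N}. g i \<le> ?h"
  proof
    fix i assume i: "i \<in> {1..N}"
    show "g i \<le> ?h" using le[rule_format, OF i] hatJ_eq[OF NEP i] by simp
  qed
  have ne: "{1..N} \<noteq> {}" using N_pos by simp
  have "(\<Prod>i\<in>{1..N}. ?h - g i) \<le> ((\<Sum>i\<in>{1..N}. ?h - g i) / card {1..N}) ^ card {1..N}"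
    by (rule amgm) (use le' ne in auto)
  also have "\<dots> \<le> (?h - Js / N) ^ N"
  proof -
    have "(\<Sum>i\<in>{1..N}. ?h - g i) = N * ?h - (\<Sum>i\<in>{1..N}. g i)" by (simp add: sum_subtractf)
    hence s: "(\<Sum>i\<in>{1..N}. ?h - g i) \<le> N * ?h - Js" using G_sum[OF g] by simp
    have nn: "0 \<le> (\<Sum>i\<in>{1..N}. ?h - g i)" using le' by (intro sum_nonneg) auto
    have Npos: "real N > 0" using N_pos by simp
    have "(\<Sum>i\<in>{1..N}. ?h - g i) / N \<le> ?h - Js / N"
      using s Npos by (simp add: field_simps)
    moreover have "0 \<le> (\<Sum>i\<in>{1..N}. ?h - g i) / N" using nn by simp
    ultimately show ?thesis by (simp add: power_mono)
  qed
  also have "\<dots> = (\<Prod>i\<in>{1..N}. ?h - cst i)" by (rule prod_cst[symmetric])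
  finally show "(\<Prod>i\<in>{1..N}. cost N L T i fh - g i) \<le> (\<Prod>i\<in>{1..N}. cost N L T i fh - cst i)"
    unfolding prod_hat[OF NEP] .
qed

lemma NBS_unique:
  assumes NEP: "is_NEP N L T r fh"
    and nbs: "is_NBS N (cost_set N L T r) (\<lambda>i. cost N L T i fh) gt"
  shows "gt = cst"
proof -
  let ?h = "cost N L T 1 fh"
  define m where "m = ?h - Js / N"
  define y where "y i = ?h - gt i" for i
  have gtG: "gt \<in> cost_set N L T r" using nbs unfolding is_NBS_def by auto
  have yn: "\<forall>i\<in>{1..N}. y i \<ge> 0"
  proof
    fix i assume i: "i \<in> {1..N}"
    have "\<forall>i\<in>{1..N}. gt i \<le> cost N L T i fh" using nbs unfolding is_NBS_def by blast
    thus "y i \<ge> 0" using hatJ_eq[OF NEP i] i unfolding y_def by (metis diff_ge_0_iff_ge)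
  qed
  have Npos: "real N > 0" using N_pos by simp
  have ne: "{1..N} \<noteq> {}" using N_pos by simp
  have "(\<Sum>i\<in>{1..N}. y i) = N * ?h - (\<Sum>i\<in>{1..N}. gt i)" unfolding y_def by (simp add: sum_subtractf)
  moreover have "card {1..N} * m = N * ?h - Js" using Npos unfolding m_def by (simp add: field_simps)
  ultimately have sy: "(\<Sum>i\<in>{1..N}. y i) \<le> card {1..N} * m" using G_sum[OF gtG] by linarith
  have m0: "m \<ge> 0" using h_ge[OF NEP] unfolding m_def by simp
  have "(\<Prod>i\<in>{1..N}. cost N L T i fh - cst i) \<le> (\<Prod>i\<in>{1..N}. cost N L T i fh - gt i)"
    using nbs cst_in_G cst_NBS[OF NEP] unfolding is_NBS_def by blast
  hence py: "(\<Prod>i\<in>{1..N}. y i) \<ge> m ^ card {1..N}"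
    unfolding prod_hat[OF NEP] prod_cst y_def m_def by simp
  have all: "\<forall>i\<in>{1..N}. y i = m"
  proof (cases "m = 0")
    case True
    hence "(\<Sum>i\<in>{1..N}. y i) \<le> 0" using sy by simp
    moreover have "(\<Sum>i\<in>{1..N}. y i) \<ge> 0" using yn by (intro sum_nonneg) auto
    ultimately have "(\<Sum>i\<in>{1..N}. y i) = 0" by simp
    hence "\<forall>i\<in>{1..N}. y i = 0" using yn by (subst (asm) sum_nonneg_eq_0_iff) auto
    thus ?thesis using True by simp
  next
    case False
    hence "m > 0" using m0 by simp
    thus ?thesis by (intro amgm_eq[OF _ ne yn sy _ py]) auto
  qed
  show ?thesis
  proof
    fix i show "gt i = cst i"
    proof (cases "i \<in> {1..N}")
      case True thus ?thesis using all unfolding y_def m_def cst_def by auto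
    next
      case False thus ?thesis using G_zero[OF gtG False] unfolding cst_def by auto
    qed
  qed
qed

lemma sum_cst: "(\<Sum>i\<in>{1..N}. cst i) = Js"
proof -
  have "(\<Sum>i\<in>{1..N}. cst i) = (\<Sum>i\<in>{1..N}. Js / N)" unfolding cst_def by (intro sum.cong) auto
  thus ?thesis using N_pos by simp
qed

end

theorem theorem3p3:
  fixes N L :: nat and T :: "nat \<Rightarrow> real \<Rightarrow> real" and r :: "nat \<Rightarrow> real"
    and fh :: "nat \<Rightarrow> nat \<Rightarrow> real"
  assumes N_pos: "N \<ge> 1" and L_pos: "L \<ge> 1"
    and r_pos: "\<forall>i\<in>{1..N}. r i > 0"
    and r_equal: "\<forall>i\<in>{1..N}. r i = (\<Sum>j\<in>{1..N}. r j) / real N"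
    and T_nonneg: "\<forall>l\<in>{1..L}. \<forall>x\<ge>0. T l x \<ge> 0"
    and T_incr: "\<forall>l\<in>{1..L}. strict_mono_on {0..} (T l)"
    and T_convex: "\<forall>l\<in>{1..L}. convex_on {0..} (T l)"
    and T_C1: "\<forall>l\<in>{1..L}. \<exists>T'. (\<forall>x\<ge>0. (T l has_real_derivative T' x) (at x within {0..}))
                                 \<and> continuous_on {0..} T'"
    and NEP: "is_NEP N L T r fh"
  shows "(\<forall>g1 g2. g1 \<in> cost_set N L T r \<and> g2 \<in> cost_set N L T r
            \<and> pareto_opt N (cost_set N L T r) g1
            \<and> symmetric_N3 N (cost_set N L T r) (\<lambda>i. cost N L T i fh) g1
            \<and> pareto_opt N (cost_set N L T r) g2
            \<and> symmetric_N3 N (cost_set N L T r) (\<lambda>i. cost N L T i fh) g2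
            \<longrightarrow> g1 = g2)
       \<and> (\<exists>gt. is_NBS N (cost_set N L T r) (\<lambda>i. cost N L T i fh) gt)
       \<and> (\<forall>gt. is_NBS N (cost_set N L T r) (\<lambda>i. cost N L T i fh) gt \<longrightarrow>
            (\<Sum>i\<in>{1..N}. gt i) / J_sys_opt N L T r = 1
            \<and> (\<exists>f\<in>feasible N L r. gt = cost_vec N L T f
                 \<and> (\<forall>f'\<in>feasible N L r. J_sys N L T f \<le> J_sys N L T f')))"
proof -
  obtain D where D0: "\<forall>l\<in>{1..L}. (\<forall>x\<ge>0. (T l has_real_derivative D l x) (at x within {0..}))
                                 \<and> continuous_on {0..} (D l)"
    using bchoice[OF T_C1] by blast
  have D: "\<forall>l\<in>{1..L}. \<forall>x\<ge>0. (T l has_real_derivative D l x) (at x within {0..})"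
    using D0 by blast
  interpret gm: game N L T r D
    by (unfold_locales) (rule N_pos L_pos r_pos r_equal T_nonneg T_incr T_convex D)+
  show ?thesis
  proof (intro conjI)
    show "\<forall>g1 g2. g1 \<in> cost_set N L T r \<and> g2 \<in> cost_set N L T r
            \<and> pareto_opt N (cost_set N L T r) g1
            \<and> symmetric_N3 N (cost_set N L T r) (\<lambda>i. cost N L T i fh) g1
            \<and> pareto_opt N (cost_set N L T r) g2
            \<and> symmetric_N3 N (cost_set N L T r) (\<lambda>i. cost N L T i fh) g2
            \<longrightarrow> g1 = g2"
    proof (intro allI impI)
      fix g1 g2 assume h: "g1 \<in> cost_set N L T r \<and> g2 \<in> cost_set N L T r
            \<and> pareto_opt N (cost_set N L T r) g1
            \<and> symmetric_N3 N (cost_set N L T r) (\<lambda>i. cost N L T i fh) g1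
            \<and> pareto_opt N (cost_set N L T r) g2
            \<and> symmetric_N3 N (cost_set N L T r) (\<lambda>i. cost N L T i fh) g2"
      have "g1 = gm.cst" using h gm.part1[OF NEP, of g1] by blast
      moreover have "g2 = gm.cst" using h gm.part1[OF NEP, of g2] by blast
      ultimately show "g1 = g2" by simp
    qed
    show "\<exists>gt. is_NBS N (cost_set N L T r) (\<lambda>i. cost N L T i fh) gt"
      using gm.cst_NBS[OF NEP] by blast
    show "\<forall>gt. is_NBS N (cost_set N L T r) (\<lambda>i. cost N L T i fh) gt \<longrightarrow>
            (\<Sum>i\<in>{1..N}. gt i) / J_sys_opt N L T r = 1
            \<and> (\<exists>f\<in>feasible N L r. gt = cost_vec N L T f
                 \<and> (\<forall>f'\<in>feasible N L r. J_sys N L T f \<le> J_sys N L T f'))"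
    proof (intro allI impI)
      fix gt assume nbs: "is_NBS N (cost_set N L T r) (\<lambda>i. cost N L T i fh) gt"
      have gt: "gt = gm.cst" by (rule gm.NBS_unique[OF NEP nbs])
      have "(\<Sum>i\<in>{1..N}. gt i) / J_sys_opt N L T r = 1"
        unfolding gt gm.sum_cst gm.Jsys_opt_eq using gm.Js_pos by simp
      moreover have "\<exists>f\<in>feasible N L r. gt = cost_vec N L T f
                 \<and> (\<forall>f'\<in>feasible N L r. J_sys N L T f \<le> J_sys N L T f')"
      proof (intro bexI conjI ballI)
        show "gm.spl gm.xo \<in> feasible N L r" by (rule gm.split_feas[OF gm.xo(1)])
        show "gt = cost_vec N L T (gm.spl gm.xo)" unfolding gt gm.cost_vec_split ..
        fix f' assume "f' \<in> feasible N L r"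
        thus "J_sys N L T (gm.spl gm.xo) \<le> J_sys N L T f'"
          unfolding gm.Jsys_split by (rule gm.Jsys_ge)
      qed
      ultimately show "(\<Sum>i\<in>{1..N}. gt i) / J_sys_opt N L T r = 1
            \<and> (\<exists>f\<in>feasible N L r. gt = cost_vec N L T f
                 \<and> (\<forall>f'\<in>feasible N L r. J_sys N L T f \<le> J_sys N L T f'))" by blast
    qed
  qed
qed

end
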